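(* Let $W$ be a real vector space and $w_1,w_2,w_3,w_4\in W$. For $t\in[0,1]$ put $w_1(t)=(1-t)w_1+tw_2$, $w_2(t)=(1-t)w_2+tw_3$, $w_3(t)=(1-t)w_3+tw_1$, $w_4(t)=w_4$. Then $\operatorname{rank}(w_i)_{i=1}^4\ge 3$ if and only if $\operatorname{rank}(w_i(t))_{i=1}^4\ge 3$ for all $0\le t\le 1$.
   Context: The rank of a finite sequence of vectors is the dimension of the linear subspace they span. *)

theory Defs
  imports "HOL-Analysis.Analysis"
begin

definition rank_seq :: "'a::real_vector list \<Rightarrow> nat" where
  "rank_seq ws = dim (span (set ws))"

end

theory Submission
  imports Defs
begin

lemma inv_comb:
  fixes w1 w2 w3 :: "'a::real_vector" and a b :: real
  assumes D: "a^3 + b^3 \<noteq> 0"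
  shows "w1 = (1/(a^3+b^3)) *\<^sub>R ((a^2) *\<^sub>R (a *\<^sub>R w1 + b *\<^sub>R w2) - (a*b) *\<^sub>R (a *\<^sub>R w2 + b *\<^sub>R w3) + (b^2) *\<^sub>R (a *\<^sub>R w3 + b *\<^sub>R w1))"
proof -
  have "(a^2) *\<^sub>R (a *\<^sub>R w1 + b *\<^sub>R w2) - (a*b) *\<^sub>R (a *\<^sub>R w2 + b *\<^sub>R w3) + (b^2) *\<^sub>R (a *\<^sub>R w3 + b *\<^sub>R w1) = (a^3+b^3) *\<^sub>R w1"
    by (simp add: algebra_simps scaleR_add_right scaleR_diff_right power2_eq_square power3_eq_cube)
  then show ?thesis using D by simp
qed

lemma span_same:
  fixes w1 w2 w3 w4 :: "'a::real_vector" and t :: real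
  assumes "0 \<le> t" "t \<le> 1"
  shows "span (set [(1 - t) *\<^sub>R w1 + t *\<^sub>R w2, (1 - t) *\<^sub>R w2 + t *\<^sub>R w3,
                 (1 - t) *\<^sub>R w3 + t *\<^sub>R w1, w4]) = span (set [w1,w2,w3,w4])"
proof -
  define a where "a = 1 - t"
  define b where "b = t"
  have ab: "a \<ge> 0" "b \<ge> 0" "a + b = 1" using assms by (auto simp: a_def b_def)
  have D: "a^3 + b^3 \<noteq> 0"
  proof
    assume "a^3 + b^3 = 0"
    moreover have "a^3 \<ge> 0" "b^3 \<ge> 0" using ab by auto
    ultimately have "a^3 = 0" "b^3 = 0" by linarith+
    then show False using ab by simp
  qed
  let ?u1 = "a *\<^sub>R w1 + b *\<^sub>R w2" and ?u2 = "a *\<^sub>R w2 + b *\<^sub>R w3" and ?u3 = "a *\<^sub>R w3 + b *\<^sub>R w1"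
  let ?S = "span {?u1, ?u2, ?u3, w4}"
  have m: "\<And>x y z. x \<in> ?S \<Longrightarrow> y \<in> ?S \<Longrightarrow> z \<in> ?S \<Longrightarrow>
     (1/(a^3+b^3)) *\<^sub>R ((a^2) *\<^sub>R x - (a*b) *\<^sub>R y + (b^2) *\<^sub>R z) \<in> ?S"
    by (intro span_scale span_add span_diff) auto
  have u: "?u1 \<in> ?S" "?u2 \<in> ?S" "?u3 \<in> ?S" "w4 \<in> ?S" by (auto intro: span_base)
  have "w1 \<in> ?S" using m[OF u(1) u(2) u(3)] inv_comb[OF D, of w1 w2 w3] by simp
  moreover have "w2 \<in> ?S" using m[OF u(2) u(3) u(1)] inv_comb[OF D, of w2 w3 w1] by simp
  moreover have "w3 \<in> ?S" using m[OF u(3) u(1) u(2)] inv_comb[OF D, of w3 w1 w2] by simp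
  ultimately have 1: "{w1,w2,w3,w4} \<subseteq> ?S" using u by auto
  have 2: "{?u1, ?u2, ?u3, w4} \<subseteq> span {w1,w2,w3,w4}"
  proof -
    let ?T = "span {w1,w2,w3,w4}"
    have "w1 \<in> ?T" "w2 \<in> ?T" "w3 \<in> ?T" "w4 \<in> ?T" by (auto intro: span_base)
    then show ?thesis by (auto intro!: span_add span_scale)
  qed
  have "?S = span {w1,w2,w3,w4}" using 1 2 span_eq by blast
  then show ?thesis by (simp add: a_def b_def)
qed

theorem lemma2p2:
  fixes w1 w2 w3 w4 :: "'a::real_vector"
  shows "rank_seq [w1, w2, w3, w4] \<ge> 3 \<longleftrightarrow>
    (\<forall>t::real. 0 \<le> t \<and> t \<le> 1 \<longrightarrow>
       rank_seq [(1 - t) *\<^sub>R w1 + t *\<^sub>R w2, (1 - t) *\<^sub>R w2 + t *\<^sub>R w3,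
                 (1 - t) *\<^sub>R w3 + t *\<^sub>R w1, w4] \<ge> 3)"
  unfolding rank_seq_def
  using span_same[of 0 w1 w2 w3 w4] span_same[of _ w1 w2 w3 w4] by auto

end
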